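(* Let $k$ be a commutative ring, $A$ a commutative $k$-algebra, $(A,\mathfrak g_{A/k},\alpha)$ a Lie algebroid, $S^\cdot$ a noetherian graded $\mathfrak g_{A/k}$-algebra which is semi-simple over $\mathfrak g_{A/k}$ with $\bar S^0$ noetherian, and $M^\cdot$ a graded $(S^\cdot,\mathfrak g_{A/k})$-module of finite type over $S^\cdot$ which is semi-simple over $\mathfrak g_{A/k}$. Write $S^\cdot=A\bar S^\cdot\oplus Q$ with $Q$ a (semi-simple) $\mathfrak g_{A/k}$-submodule of $S^\cdot$, and $M^\cdot=A\bar M^\cdot\oplus M_1$ with $M_1$ a $\mathfrak g_{A/k}$-submodule of $M^\cdot$. Then $Q\cdot\bar M^\cdot\subset M_1$.
   Context: A Lie algebroid $(A,\mathfrak g_{A/k},\alpha)$: an $A$-module of finite type $\mathfrak g_{A/k}$ with a $k$-bilinear Lie bracket and a map $\alpha:\mathfrak g_{A/k}\to T_{A/k}$ (the $k$-derivations of $A$) which is a homomorphism of Lie algebras and $A$-modules, with $[\delta,a\eta]=\alpha(\delta)(a)\eta+a[\delta,\eta]$. A $\mathfrak g_{A/k}$-module is an $A$-module $M$ with a $k$-Lie algebra homomorphism $f:\mathfrak g_{A/k}\to\mathrm{End}_k(M)$ satisfying $f(a\delta)(m)=af(\delta)(m)$ and $f(\delta)(am)=\alpha(\delta)(a)m+af(\delta)(m)$; semi-simple means a direct sum of simple $\mathfrak g_{A/k}$-modules. A graded $\mathfrak g_{A/k}$-algebra is a graded commutative $A$-algebra $S^\cdot=\bigoplus_{i\ge0}S^i$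 which is a $\mathfrak g_{A/k}$-module via an $A$-linear Lie algebra homomorphism $\phi:\mathfrak g_{A/k}\to T_{S^\cdot/k}$ preserving each $S^i$. A graded $(S^\cdot,\mathfrak g_{A/k})$-module is a graded $S^\cdot$-module $M^\cdot=\bigoplus_{i\in\mathbb Z}M^i$ which is a $\mathfrak g_{A/k}$-module with $\delta M^i\subset M^i$ and $\delta(sm)=\delta(s)m+s\,\delta m$. Bars denote invariants: $\bar M^\cdot=\{m:\delta m=0\ \forall\delta\in\mathfrak g_{A/k}\}$, similarly $\bar S^\cdot$; $A\bar S^\cdot$ and $A\bar M^\cdot$ are the $A$-submodules they generate, which are $\mathfrak g_{A/k}$-submodules. *)

theory Defs
  imports Complex_Main
begin

text \<open>Base ring k (type 'k), commutative k-algebra A (type 'a) via the structure map iota.\<close>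

definition ring_hom_fun :: "('r::comm_ring_1 \<Rightarrow> 's::comm_ring_1) \<Rightarrow> bool" where
  "ring_hom_fun f \<longleftrightarrow> (\<forall>x y. f (x + y) = f x + f y) \<and> (\<forall>x y. f (x * y) = f x * f y) \<and> f 1 = 1"

definition kder :: "('k::comm_ring_1 \<Rightarrow> 'r::comm_ring_1) \<Rightarrow> ('r \<Rightarrow> 'r) \<Rightarrow> bool" where
  "kder \<iota> D \<longleftrightarrow> (\<forall>x y. D (x + y) = D x + D y) \<and> (\<forall>c x. D (\<iota> c * x) = \<iota> c * D x)
     \<and> (\<forall>x y. D (x * y) = x * D y + y * D x)"

definition lie_algebroid ::
  "('k::comm_ring_1 \<Rightarrow> 'a::comm_ring_1) \<Rightarrow> ('a \<Rightarrow> 'g::ab_group_add \<Rightarrow> 'g) \<Rightarrow> ('g \<Rightarrow> 'g \<Rightarrow> 'g)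
    \<Rightarrow> ('g \<Rightarrow> 'a \<Rightarrow> 'a) \<Rightarrow> bool" where
  "lie_algebroid \<iota> sm br al \<longleftrightarrow>
     ring_hom_fun \<iota> \<and> module sm \<and> (\<exists>G. finite G \<and> module.span sm G = UNIV)
     \<and> (\<forall>x y z. br (x + y) z = br x z + br y z)
     \<and> (\<forall>x y z. br x (y + z) = br x y + br x z)
     \<and> (\<forall>c x y. br (sm (\<iota> c) x) y = sm (\<iota> c) (br x y))
     \<and> (\<forall>c x y. br x (sm (\<iota> c) y) = sm (\<iota> c) (br x y))
     \<and> (\<forall>x. br x x = 0)
     \<and> (\<forall>x y z. br x (br y z) + br y (br z x) + br z (br x y) = 0)
     \<and> (\<forall>d. kder \<iota> (al d))
     \<and> (\<forall>a d b. al (sm a d) b = a * al d b)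
     \<and> (\<forall>d e b. al (d + e) b = al d b + al e b)
     \<and> (\<forall>d e b. al (br d e) b = al d (al e b) - al e (al d b))
     \<and> (\<forall>d a e. br d (sm a e) = sm (al d a) e + sm a (br d e))"

definition gmodule ::
  "('k::comm_ring_1 \<Rightarrow> 'a::comm_ring_1) \<Rightarrow> ('a \<Rightarrow> 'g::ab_group_add \<Rightarrow> 'g) \<Rightarrow> ('g \<Rightarrow> 'g \<Rightarrow> 'g)
    \<Rightarrow> ('g \<Rightarrow> 'a \<Rightarrow> 'a) \<Rightarrow> ('a \<Rightarrow> 'v::ab_group_add \<Rightarrow> 'v) \<Rightarrow> ('g \<Rightarrow> 'v \<Rightarrow> 'v) \<Rightarrow> bool" where
  "gmodule \<iota> sm br al sc act \<longleftrightarrow>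
     module sc
     \<and> (\<forall>d x y. act d (x + y) = act d x + act d y)
     \<and> (\<forall>d c x. act d (sc (\<iota> c) x) = sc (\<iota> c) (act d x))
     \<and> (\<forall>d e x. act (d + e) x = act d x + act e x)
     \<and> (\<forall>d e x. act (br d e) x = act d (act e x) - act e (act d x))
     \<and> (\<forall>a d x. act (sm a d) x = sc a (act d x))
     \<and> (\<forall>d a x. act d (sc a x) = sc (al d a) x + sc a (act d x))"

definition gsubmodule :: "('a::comm_ring_1 \<Rightarrow> 'v::ab_group_add \<Rightarrow> 'v) \<Rightarrow> ('g \<Rightarrow> 'v \<Rightarrow> 'v) \<Rightarrow> 'v set \<Rightarrow> bool" where
  "gsubmodule sc act N \<longleftrightarrow> module.subspace sc N \<and> (\<forall>d. \<forall>x\<in>N. act d x \<in> N)"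

definition gsimple :: "('a::comm_ring_1 \<Rightarrow> 'v::ab_group_add \<Rightarrow> 'v) \<Rightarrow> ('g \<Rightarrow> 'v \<Rightarrow> 'v) \<Rightarrow> 'v set \<Rightarrow> bool" where
  "gsimple sc act N \<longleftrightarrow> gsubmodule sc act N \<and> N \<noteq> {0}
     \<and> (\<forall>N'. gsubmodule sc act N' \<and> N' \<subseteq> N \<longrightarrow> N' = {0} \<or> N' = N)"

definition gsemisimple :: "('a::comm_ring_1 \<Rightarrow> 'v::ab_group_add \<Rightarrow> 'v) \<Rightarrow> ('g \<Rightarrow> 'v \<Rightarrow> 'v) \<Rightarrow> bool" where
  "gsemisimple sc act \<longleftrightarrow> (\<exists>\<N>. (\<forall>N\<in>\<N>. gsimple sc act N)
     \<and> (\<forall>v. \<exists>F x. F \<subseteq> \<N> \<and> finite F \<and> (\<forall>N\<in>F. x N \<in> N) \<and> v = (\<Sum>N\<in>F. x N))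
     \<and> (\<forall>F x. F \<subseteq> \<N> \<and> finite F \<and> (\<forall>N\<in>F. x N \<in> N) \<and> (\<Sum>N\<in>F. x N) = 0
            \<longrightarrow> (\<forall>N\<in>F. x N = 0)))"

definition invariants :: "('g \<Rightarrow> 'v::zero \<Rightarrow> 'v) \<Rightarrow> 'v set" where
  "invariants act = {v. \<forall>d. act d v = 0}"

definition direct_grading :: "('i \<Rightarrow> 'v::ab_group_add set) \<Rightarrow> bool" where
  "direct_grading P \<longleftrightarrow> (\<forall>i. 0 \<in> P i \<and> (\<forall>x\<in>P i. \<forall>y\<in>P i. x + y \<in> P i \<and> - x \<in> P i))
     \<and> (\<forall>v. \<exists>!c. finite {i. c i \<noteq> 0} \<and> (\<forall>i. c i \<in> P i) \<and> v = (\<Sum>i\<in>{i. c i \<noteq> 0}. c i))"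

definition subring_ideal :: "'r::comm_ring_1 set \<Rightarrow> 'r set \<Rightarrow> bool" where
  "subring_ideal R I \<longleftrightarrow> I \<subseteq> R \<and> 0 \<in> I \<and> (\<forall>x\<in>I. \<forall>y\<in>I. x + y \<in> I) \<and> (\<forall>r\<in>R. \<forall>x\<in>I. r * x \<in> I)"

definition is_subring :: "'r::comm_ring_1 set \<Rightarrow> bool" where
  "is_subring R \<longleftrightarrow> 0 \<in> R \<and> 1 \<in> R \<and> (\<forall>x\<in>R. \<forall>y\<in>R. x + y \<in> R \<and> x * y \<in> R \<and> - x \<in> R)"

definition noetherian_subring :: "'r::comm_ring_1 set \<Rightarrow> bool" where
  "noetherian_subring R \<longleftrightarrow> is_subring R \<and> (\<forall>I. subring_ideal R I \<longrightarrow>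
     (\<exists>G. finite G \<and> G \<subseteq> R \<and> I = {\<Sum>g\<in>G. r g * g | r. \<forall>g\<in>G. r g \<in> R}))"

definition graded_galgebra ::
  "('k::comm_ring_1 \<Rightarrow> 'a::comm_ring_1) \<Rightarrow> ('a \<Rightarrow> 'g::ab_group_add \<Rightarrow> 'g) \<Rightarrow> ('g \<Rightarrow> 'g \<Rightarrow> 'g)
    \<Rightarrow> ('g \<Rightarrow> 'a \<Rightarrow> 'a) \<Rightarrow> ('a \<Rightarrow> 's::comm_ring_1) \<Rightarrow> (nat \<Rightarrow> 's set) \<Rightarrow> ('g \<Rightarrow> 's \<Rightarrow> 's) \<Rightarrow> bool" where
  "graded_galgebra \<iota> sm br al j Sg \<phi> \<longleftrightarrow>
     ring_hom_fun j \<and> direct_grading Sg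
     \<and> (\<forall>i k. \<forall>x\<in>Sg i. \<forall>y\<in>Sg k. x * y \<in> Sg (i + k))
     \<and> (\<forall>a i. \<forall>x\<in>Sg i. j a * x \<in> Sg i)
     \<and> (\<forall>d. kder (j \<circ> \<iota>) (\<phi> d))
     \<and> gmodule \<iota> sm br al (\<lambda>a s. j a * s) \<phi>
     \<and> (\<forall>d i. \<forall>x\<in>Sg i. \<phi> d x \<in> Sg i)"

definition graded_Sg_module ::
  "('k::comm_ring_1 \<Rightarrow> 'a::comm_ring_1) \<Rightarrow> ('a \<Rightarrow> 'g::ab_group_add \<Rightarrow> 'g) \<Rightarrow> ('g \<Rightarrow> 'g \<Rightarrow> 'g)
    \<Rightarrow> ('g \<Rightarrow> 'a \<Rightarrow> 'a) \<Rightarrow> ('a \<Rightarrow> 's::comm_ring_1) \<Rightarrow> (nat \<Rightarrow> 's set) \<Rightarrow> ('g \<Rightarrow> 's \<Rightarrow> 's)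
    \<Rightarrow> ('s \<Rightarrow> 'm::ab_group_add \<Rightarrow> 'm) \<Rightarrow> (int \<Rightarrow> 'm set) \<Rightarrow> ('g \<Rightarrow> 'm \<Rightarrow> 'm) \<Rightarrow> bool" where
  "graded_Sg_module \<iota> sm br al j Sg \<phi> smM Mg \<rho> \<longleftrightarrow>
     module smM \<and> direct_grading Mg
     \<and> (\<forall>i n. \<forall>s\<in>Sg i. \<forall>m\<in>Mg n. smM s m \<in> Mg (int i + n))
     \<and> gmodule \<iota> sm br al (\<lambda>a m. smM (j a) m) \<rho>
     \<and> (\<forall>d n. \<forall>m\<in>Mg n. \<rho> d m \<in> Mg n)
     \<and> (\<forall>d s m. \<rho> d (smM s m) = smM (\<phi> d s) m + smM s (\<rho> d m))"

end

theory Submission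
  imports Defs
begin

definition glin :: "('a::comm_ring_1 \<Rightarrow> 'v::ab_group_add \<Rightarrow> 'v) \<Rightarrow> ('g \<Rightarrow> 'v \<Rightarrow> 'v)
   \<Rightarrow> ('a \<Rightarrow> 'w::ab_group_add \<Rightarrow> 'w) \<Rightarrow> ('g \<Rightarrow> 'w \<Rightarrow> 'w) \<Rightarrow> ('v \<Rightarrow> 'w) \<Rightarrow> bool" where
  "glin sc1 act1 sc2 act2 f \<longleftrightarrow> (\<forall>x y. f (x + y) = f x + f y) \<and> (\<forall>a x. f (sc1 a x) = sc2 a (f x))
     \<and> (\<forall>d x. f (act1 d x) = act2 d (f x))"

lemma glin_additive: "glin sc1 act1 sc2 act2 f \<Longrightarrow> additive f"
  by (simp add: glin_def additive_def)

lemma glin_zero: "glin sc1 act1 sc2 act2 f \<Longrightarrow> f 0 = 0"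
  using additive.zero glin_additive by blast

lemma glin_sum: "glin sc1 act1 sc2 act2 f \<Longrightarrow> f (sum g F) = (\<Sum>x\<in>F. f (g x))"
  using additive.sum glin_additive by blast

lemma glin_comp: "glin sc1 act1 sc2 act2 f \<Longrightarrow> glin sc2 act2 sc3 act3 g \<Longrightarrow> glin sc1 act1 sc3 act3 (g \<circ> f)"
  by (simp add: glin_def)

lemma gsub_image:
  assumes "module sc1" "module sc2" "glin sc1 act1 sc2 act2 f" "gsubmodule sc1 act1 N"
  shows "gsubmodule sc2 act2 (f ` N)"
proof -
  have f0: "f 0 = 0" using glin_zero assms(3) .
  show ?thesis using assms unfolding gsubmodule_def module.subspace_def[OF assms(1)] module.subspace_def[OF assms(2)] glin_def
    by (smt (verit) f0 image_iff)
qed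

lemma gsub_kernel:
  assumes "module sc1" "glin sc1 act1 sc2 act2 f" "gsubmodule sc1 act1 N" "module sc2" "\<And>d. act2 d 0 = 0"
  shows "gsubmodule sc1 act1 {x\<in>N. f x = 0}"
proof -
  have f0: "f 0 = 0" using glin_zero assms(2) .
  have "\<And>a. sc2 a 0 = 0" using module.scale_zero_right[OF assms(4)] .
  then show ?thesis using assms f0 unfolding gsubmodule_def module.subspace_def[OF assms(1)] glin_def
    by auto
qed

definition proj :: "'v::ab_group_add set \<Rightarrow> 'v set \<Rightarrow> 'v \<Rightarrow> 'v" where
  "proj U W v = (SOME x. x \<in> U \<and> v - x \<in> W)"

lemma proj_unique:
  assumes "module sc" "gsubmodule sc act U" "gsubmodule sc act W" "U \<inter> W = {0}"
    "\<forall>v. \<exists>x\<in>U. \<exists>y\<in>W. v = x + y" "x \<in> U" "v - x \<in> W"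
  shows "proj U W v = x"
proof -
  have sU: "module.subspace sc U" and sW: "module.subspace sc W" using assms(2,3) by (auto simp: gsubmodule_def)
  have ex: "\<exists>x. x \<in> U \<and> v - x \<in> W" using assms(6,7) by blast
  define z where "z = proj U W v"
  have z: "z \<in> U \<and> v - z \<in> W" unfolding z_def proj_def using someI_ex[OF ex] .
  have "z - x \<in> U" using z assms(6) module.subspace_diff[OF assms(1) sU] by blast
  moreover have "z - x = (v - x) - (v - z)" by simp
  hence "z - x \<in> W" using z assms(7) module.subspace_diff[OF assms(1) sW] by metis
  ultimately have "z - x = 0" using assms(4) by blast
  thus ?thesis unfolding z_def by simp
qed

lemma proj_in:
  assumes "\<forall>v. \<exists>x\<in>U. \<exists>y\<in>W. v = x + y"
  shows "proj U W v \<in> U \<and> v - proj U W v \<in> W"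
proof -
  obtain x y where "x \<in> U" "y \<in> W" "v = x + y" using assms by blast
  hence ex: "\<exists>x. x \<in> U \<and> v - x \<in> W" by (intro exI[of _ x]) simp
  show ?thesis unfolding proj_def using someI_ex[OF ex] .
qed

lemma proj_glin:
  assumes "module sc" "gsubmodule sc act U" "gsubmodule sc act W" "U \<inter> W = {0}"
    "\<forall>v. \<exists>x\<in>U. \<exists>y\<in>W. v = x + y" "\<forall>d x y. act d (x + y) = act d x + act d y"
  shows "glin sc act sc act (proj U W)"
proof -
  have sU: "module.subspace sc U" and sW: "module.subspace sc W" using assms(2,3) by (auto simp: gsubmodule_def)
  have P: "\<And>v. proj U W v \<in> U \<and> v - proj U W v \<in> W" using proj_in[OF assms(5)] .
  note U = proj_unique[OF assms(1-5)]
  have ad: "\<And>d. additive (act d)" using assms(6) by (simp add: additive_def)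
  show ?thesis unfolding glin_def
  proof (intro conjI allI)
    fix x y
    show "proj U W (x + y) = proj U W x + proj U W y"
      apply (rule U)
      using P module.subspace_add[OF assms(1) sU] apply blast
      using P module.subspace_add[OF assms(1) sW, of "x - proj U W x" "y - proj U W y"]
      by (simp add: algebra_simps)
  next
    fix a x
    show "proj U W (sc a x) = sc a (proj U W x)"
      apply (rule U)
      using P module.subspace_scale[OF assms(1) sU] apply blast
      using P module.subspace_scale[OF assms(1) sW, of "x - proj U W x" a]
      by (simp add: module.scale_right_diff_distrib[OF assms(1)])
  next
    fix d x
    show "proj U W (act d x) = act d (proj U W x)"
      apply (rule U)
      using P assms(2) unfolding gsubmodule_def apply blast
      using P assms(3) additive.diff[OF ad] unfolding gsubmodule_def by metis
  qed
qed

definition decomp :: "'v::ab_group_add set set \<Rightarrow> 'v \<Rightarrow> 'v set set \<Rightarrow> ('v set \<Rightarrow> 'v) \<Rightarrow> bool" where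
  "decomp \<N> v F x \<longleftrightarrow> F \<subseteq> \<N> \<and> finite F \<and> (\<forall>N\<in>F. x N \<in> N) \<and> v = (\<Sum>N\<in>F. x N)"

definition comp :: "'v::ab_group_add set set \<Rightarrow> 'v set \<Rightarrow> 'v \<Rightarrow> 'v" where
  "comp \<N> N v = (SOME w. \<exists>F x. decomp \<N> v F x \<and> w = (if N \<in> F then x N else 0))"

lemma decomp_unique:
  assumes "module sc" "\<forall>N\<in>\<N>. module.subspace sc N"
    "\<forall>F x. F \<subseteq> \<N> \<and> finite F \<and> (\<forall>N\<in>F. x N \<in> N) \<and> (\<Sum>N\<in>F. x N) = 0 \<longrightarrow> (\<forall>N\<in>F. x N = 0)"
    "decomp \<N> v F x" "decomp \<N> v G y"
  shows "(if N \<in> F then x N else 0) = (if N \<in> G then y N else 0)"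
proof -
  define H where "H = F \<union> G"
  define z where "z = (\<lambda>N. (if N \<in> F then x N else 0) - (if N \<in> G then y N else 0))"
  have fH: "finite H" and HN: "H \<subseteq> \<N>" using assms(4,5) by (auto simp: decomp_def H_def)
  have zN: "\<forall>N\<in>H. z N \<in> N"
  proof
    fix N assume N: "N \<in> H"
    hence sN: "module.subspace sc N" using HN assms(2) by blast
    have "(if N \<in> F then x N else 0) \<in> N" using assms(4) module.subspace_0[OF assms(1) sN] by (auto simp: decomp_def)
    moreover have "(if N \<in> G then y N else 0) \<in> N" using assms(5) module.subspace_0[OF assms(1) sN] by (auto simp: decomp_def)
    ultimately show "z N \<in> N" unfolding z_def using module.subspace_diff[OF assms(1) sN] by blast
  qed
  have "(\<Sum>N\<in>H. z N) = (\<Sum>N\<in>H. (if N \<in> F then x N else 0)) - (\<Sum>N\<in>H. (if N \<in> G then y N else 0))"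
    unfolding z_def by (simp add: sum_subtractf)
  also have "\<dots> = sum x (H \<inter> F) - sum y (H \<inter> G)" using fH by (simp add: sum.inter_restrict)
  also have "\<dots> = 0" using assms(4,5) by (simp add: decomp_def H_def Int_absorb1)
  finally have "\<forall>N\<in>H. z N = 0" using assms(3) fH HN zN by blast
  moreover have "N \<notin> H \<Longrightarrow> z N = 0" by (simp add: z_def H_def)
  ultimately have "z N = 0" by blast
  thus ?thesis by (simp add: z_def)
qed

lemma comp_eq:
  assumes "module sc" "\<forall>N\<in>\<N>. module.subspace sc N"
    "\<forall>F x. F \<subseteq> \<N> \<and> finite F \<and> (\<forall>N\<in>F. x N \<in> N) \<and> (\<Sum>N\<in>F. x N) = 0 \<longrightarrow> (\<forall>N\<in>F. x N = 0)"
    "decomp \<N> v F x"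
  shows "comp \<N> N v = (if N \<in> F then x N else 0)"
proof -
  have ex: "\<exists>w. \<exists>F x. decomp \<N> v F x \<and> w = (if N \<in> F then x N else 0)" using assms(4) by blast
  obtain G y where "decomp \<N> v G y" "comp \<N> N v = (if N \<in> G then y N else 0)"
    using someI_ex[OF ex] unfolding comp_def by blast
  thus ?thesis using decomp_unique[OF assms(1-3) _ assms(4)] by metis
qed

lemma comp_props:
  assumes "module sc" "\<forall>N\<in>\<N>. gsubmodule sc act N"
    "\<forall>v. \<exists>F x. F \<subseteq> \<N> \<and> finite F \<and> (\<forall>N\<in>F. x N \<in> N) \<and> v = (\<Sum>N\<in>F. x N)"
    "\<forall>F x. F \<subseteq> \<N> \<and> finite F \<and> (\<forall>N\<in>F. x N \<in> N) \<and> (\<Sum>N\<in>F. x N) = 0 \<longrightarrow> (\<forall>N\<in>F. x N = 0)"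
    "\<forall>d x y. act d (x + y) = act d x + act d y"
  shows "glin sc act sc act (comp \<N> N)"
    and "N \<in> \<N> \<Longrightarrow> comp \<N> N v \<in> N"
    and "v \<noteq> 0 \<Longrightarrow> \<exists>N\<in>\<N>. comp \<N> N v \<noteq> 0"
proof -
  have sub: "\<forall>N\<in>\<N>. module.subspace sc N" using assms(2) by (simp add: gsubmodule_def)
  note CE = comp_eq[OF assms(1) sub assms(4)]
  have D: "\<And>v. \<exists>F x. decomp \<N> v F x" using assms(3) unfolding decomp_def by blast
  show "N \<in> \<N> \<Longrightarrow> comp \<N> N v \<in> N"
  proof -
    assume N: "N \<in> \<N>"
    obtain F x where d: "decomp \<N> v F x" using D by blast
    show ?thesis using CE[OF d] d module.subspace_0[OF assms(1)] sub N by (auto simp: decomp_def)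
  qed
  show "v \<noteq> 0 \<Longrightarrow> \<exists>N\<in>\<N>. comp \<N> N v \<noteq> 0"
  proof (rule ccontr)
    assume "v \<noteq> 0" and nn: "\<not> (\<exists>N\<in>\<N>. comp \<N> N v \<noteq> 0)"
    obtain F x where d: "decomp \<N> v F x" using D by blast
    have "\<forall>N\<in>F. x N = 0" using CE[OF d] d nn by (auto simp: decomp_def split: if_splits)
    hence "v = 0" using d by (simp add: decomp_def)
    thus False using \<open>v \<noteq> 0\<close> by simp
  qed
  have ad: "\<And>d. additive (act d)" using assms(5) by (simp add: additive_def)
  show "glin sc act sc act (comp \<N> N)" unfolding glin_def
  proof (intro conjI allI)
    fix v w
    obtain F x where d1: "decomp \<N> v F x" using D by blast
    obtain G y where d2: "decomp \<N> w G y" using D by blast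
    define z where "z = (\<lambda>N. (if N \<in> F then x N else 0) + (if N \<in> G then y N else 0))"
    have "decomp \<N> (v + w) (F \<union> G) z"
    proof -
      have f: "finite (F \<union> G)" using d1 d2 by (auto simp: decomp_def)
      have "(\<Sum>N\<in>F \<union> G. z N) = sum x ((F \<union> G) \<inter> F) + sum y ((F \<union> G) \<inter> G)"
        unfolding z_def using f by (simp add: sum.distrib flip: sum.inter_restrict)
      also have "\<dots> = v + w" using d1 d2 by (simp add: decomp_def Int_absorb1)
      finally have e: "v + w = (\<Sum>N\<in>F \<union> G. z N)" ..
      have "\<forall>N\<in>F \<union> G. z N \<in> N"
      proof
        fix N assume N: "N \<in> F \<union> G"
        hence sN: "module.subspace sc N" using d1 d2 sub by (auto simp: decomp_def)
        show "z N \<in> N" unfolding z_def using d1 d2 module.subspace_0[OF assms(1) sN]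
            module.subspace_add[OF assms(1) sN] by (auto simp: decomp_def)
      qed
      thus ?thesis using d1 d2 e f by (auto simp: decomp_def)
    qed
    thus "comp \<N> N (v + w) = comp \<N> N v + comp \<N> N w"
      using CE[OF d1] CE[OF d2] CE by (simp add: z_def)
  next
    fix a v
    obtain F x where d1: "decomp \<N> v F x" using D by blast
    have "decomp \<N> (sc a v) F (\<lambda>N. sc a (x N))"
      using d1 sub module.subspace_scale[OF assms(1)] unfolding decomp_def
      by (auto simp: module.scale_sum_right[OF assms(1)])
    thus "comp \<N> N (sc a v) = sc a (comp \<N> N v)"
      using CE[OF d1] CE module.scale_zero_right[OF assms(1)] by simp
  next
    fix e v
    obtain F x where d1: "decomp \<N> v F x" using D by blast
    have "decomp \<N> (act e v) F (\<lambda>N. act e (x N))"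
      using d1 assms(2) additive.sum[OF ad] unfolding decomp_def gsubmodule_def
      by (auto intro: additive.sum[OF ad])
    thus "comp \<N> N (act e v) = act e (comp \<N> N v)"
      using CE[OF d1] CE additive.zero[OF ad] by simp
  qed
qed

lemma span_inv_gsub:
  assumes "module sc" "\<forall>d x y. act d (x + y) = act d x + act d y"
    "\<forall>d a x. act d (sc a x) = sc (al d a) x + sc a (act d x)"
  shows "gsubmodule sc act (module.span sc (invariants act))"
proof -
  have ad: "\<And>d. additive (act d)" using assms(2) by (simp add: additive_def)
  let ?S = "module.span sc (invariants act)"
  have "\<And>x. x \<in> ?S \<Longrightarrow> x \<in> ?S \<and> (\<forall>d. act d x \<in> ?S)"
  proof -
    fix x assume "x \<in> ?S"
    then show "x \<in> ?S \<and> (\<forall>d. act d x \<in> ?S)"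
    proof (rule module.span_induct[OF assms(1), where P="\<lambda>x. x \<in> ?S \<and> (\<forall>d. act d x \<in> ?S)"])
      show "module.subspace sc {x. x \<in> ?S \<and> (\<forall>d. act d x \<in> ?S)}" unfolding module.subspace_def[OF assms(1)]
        using module.span_zero[OF assms(1)] module.span_add[OF assms(1)] module.span_scale[OF assms(1)]
           additive.zero[OF ad] assms(2,3) by auto
    next
      fix x assume "x \<in> invariants act"
      then show "x \<in> ?S \<and> (\<forall>d. act d x \<in> ?S)" using module.span_base[OF assms(1)] module.span_zero[OF assms(1)]
        by (auto simp: invariants_def)
    qed
  qed
  thus ?thesis unfolding gsubmodule_def using module.subspace_span[OF assms(1)] by blast
qed

lemma glin_kills_span:
  assumes "module sc1" "module sc2" "glin sc1 act1 sc2 act2 f" "\<forall>v\<in>B. f v = 0" "x \<in> module.span sc1 B"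
  shows "f x = 0"
  using assms(5)
proof (rule module.span_induct[OF assms(1), where P="\<lambda>x. f x = 0"])
  show "module.subspace sc1 {x. f x = 0}" unfolding module.subspace_def[OF assms(1)]
    using assms(3) glin_zero[OF assms(3)] module.scale_zero_right[OF assms(2)] by (auto simp: glin_def)
next
  fix x assume "x \<in> B" then show "f x = 0" using assms(4) by blast
qed

theorem mainTheorem3:
  fixes \<iota> :: "'k::comm_ring_1 \<Rightarrow> 'a::comm_ring_1"
    and sm :: "'a \<Rightarrow> 'g::ab_group_add \<Rightarrow> 'g" and br :: "'g \<Rightarrow> 'g \<Rightarrow> 'g" and al :: "'g \<Rightarrow> 'a \<Rightarrow> 'a"
    and j :: "'a \<Rightarrow> 's::comm_ring_1" and Sg :: "nat \<Rightarrow> 's set" and \<phi> :: "'g \<Rightarrow> 's \<Rightarrow> 's"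
    and smM :: "'s \<Rightarrow> 'm::ab_group_add \<Rightarrow> 'm" and Mg :: "int \<Rightarrow> 'm set" and \<rho> :: "'g \<Rightarrow> 'm \<Rightarrow> 'm"
    and Q :: "'s set" and M1 :: "'m set"
  assumes LA: "lie_algebroid \<iota> sm br al"
    and S_alg: "graded_galgebra \<iota> sm br al j Sg \<phi>"
    and S_noeth: "noetherian_subring (UNIV :: 's set)"
    and S_ss: "gsemisimple (\<lambda>a s. j a * s) \<phi>"
    and S0_noeth: "noetherian_subring (invariants \<phi> \<inter> Sg 0)"
    and M_mod: "graded_Sg_module \<iota> sm br al j Sg \<phi> smM Mg \<rho>"
    and M_fin: "\<exists>G. finite G \<and> module.span smM G = UNIV"
    and M_ss: "gsemisimple (\<lambda>a m. smM (j a) m) \<rho>"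
    and Q_sub: "gsubmodule (\<lambda>a s. j a * s) \<phi> Q"
    and S_dec: "module.span (\<lambda>a s. j a * s) (invariants \<phi>) \<inter> Q = {0}"
               "\<forall>s. \<exists>x\<in>module.span (\<lambda>a s. j a * s) (invariants \<phi>). \<exists>q\<in>Q. s = x + q"
    and M1_sub: "gsubmodule (\<lambda>a m. smM (j a) m) \<rho> M1"
    and M_dec: "module.span (\<lambda>a m. smM (j a) m) (invariants \<rho>) \<inter> M1 = {0}"
               "\<forall>m. \<exists>x\<in>module.span (\<lambda>a m. smM (j a) m) (invariants \<rho>). \<exists>y\<in>M1. m = x + y"
  shows "\<forall>q\<in>Q. \<forall>m\<in>invariants \<rho>. smM q m \<in> M1"
proof (intro ballI)
  fix q m assume qQ: "q \<in> Q" and mI: "m \<in> invariants \<rho>"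
  define scS where "scS = (\<lambda>a s. j a * (s::'s))"
  define scM where "scM = (\<lambda>a x. smM (j a) (x::'m))"
  have gS: "gmodule \<iota> sm br al scS \<phi>" using S_alg unfolding graded_galgebra_def scS_def by blast
  have gM: "gmodule \<iota> sm br al scM \<rho>" using M_mod unfolding graded_Sg_module_def scM_def by blast
  have modS: "module scS" and addS: "\<forall>d x y. \<phi> d (x + y) = \<phi> d x + \<phi> d y"
    and leibS: "\<forall>d a x. \<phi> d (scS a x) = scS (al d a) x + scS a (\<phi> d x)"
    using gS unfolding gmodule_def by blast+
  have modM: "module scM" and addM: "\<forall>d x y. \<rho> d (x + y) = \<rho> d x + \<rho> d y"
    and leibM: "\<forall>d a x. \<rho> d (scM a x) = scM (al d a) x + scM a (\<rho> d x)"
    using gM unfolding gmodule_def by blast+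
  have modsmM: "module smM" and Mleib: "\<forall>d s x. \<rho> d (smM s x) = smM (\<phi> d s) x + smM s (\<rho> d x)"
    using M_mod unfolding graded_Sg_module_def by blast+
  have adM: "\<And>d. additive (\<rho> d)" using addM by (simp add: additive_def)
  have adS: "\<And>d. additive (\<phi> d)" using addS by (simp add: additive_def)
  define US where "US = module.span scS (invariants \<phi>)"
  define UM where "UM = module.span scM (invariants \<rho>)"
  have gUS: "gsubmodule scS \<phi> US" unfolding US_def using span_inv_gsub[OF modS addS leibS] .
  have gUM: "gsubmodule scM \<rho> UM" unfolding UM_def using span_inv_gsub[OF modM addM leibM] .
  have gQ: "gsubmodule scS \<phi> Q" using Q_sub unfolding scS_def .
  have gM1: "gsubmodule scM \<rho> M1" using M1_sub unfolding scM_def .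
  have QUS: "Q \<inter> US = {0}" using S_dec(1) unfolding US_def scS_def by blast
  have decS: "\<forall>v. \<exists>x\<in>Q. \<exists>y\<in>US. v = x + y" using S_dec(2) unfolding US_def scS_def
    by (metis add.commute)
  have UMM1: "UM \<inter> M1 = {0}" using M_dec(1) unfolding UM_def scM_def by blast
  have decM: "\<forall>v. \<exists>x\<in>UM. \<exists>y\<in>M1. v = x + y" using M_dec(2) unfolding UM_def scM_def by blast
  define pQ where "pQ = proj Q US"
  define p where "p = proj UM M1"
  have pQ_lin: "glin scS \<phi> scS \<phi> pQ" unfolding pQ_def using proj_glin[OF modS gQ gUS QUS decS addS] .
  have p_lin: "glin scM \<rho> scM \<rho> p" unfolding p_def using proj_glin[OF modM gUM gM1 UMM1 decM addM] .
  define f where "f = (\<lambda>s. smM s m)"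
  have f_lin: "glin scS \<phi> scM \<rho> f" unfolding glin_def f_def scS_def scM_def
  proof (intro conjI allI)
    fix x y show "smM (x + y) m = smM x m + smM y m" using module.scale_left_distrib[OF modsmM] .
  next
    fix a x show "smM (j a * x) m = smM (j a) (smM x m)" using module.scale_scale[OF modsmM] by simp
  next
    fix d x show "smM (\<phi> d x) m = \<rho> d (smM x m)" using Mleib mI module.scale_zero_right[OF modsmM]
      by (simp add: invariants_def)
  qed
  show "smM q m \<in> M1"
  proof (rule ccontr)
    assume nM1: "smM q m \<notin> M1"
    define x where "x = p (smM q m)"
    have xP: "x \<in> UM \<and> smM q m - x \<in> M1" unfolding x_def p_def using proj_in[OF decM] .
    have x0: "x \<noteq> 0" using xP nM1 by auto
    have M_ss': "gsemisimple scM \<rho>" using M_ss unfolding scM_def .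
    obtain \<N> where NN: "(\<forall>N\<in>\<N>. gsimple scM \<rho> N)
      \<and> (\<forall>v. \<exists>F x. F \<subseteq> \<N> \<and> finite F \<and> (\<forall>N\<in>F. x N \<in> N) \<and> v = (\<Sum>N\<in>F. x N))
      \<and> (\<forall>F x. F \<subseteq> \<N> \<and> finite F \<and> (\<forall>N\<in>F. x N \<in> N) \<and> (\<Sum>N\<in>F. x N) = 0 \<longrightarrow> (\<forall>N\<in>F. x N = 0))"
      using M_ss' unfolding gsemisimple_def by (rule exE)
    have N1: "\<forall>N\<in>\<N>. gsimple scM \<rho> N" using NN by (rule conjunct1)
    have N2: "\<forall>v. \<exists>F x. F \<subseteq> \<N> \<and> finite F \<and> (\<forall>N\<in>F. x N \<in> N) \<and> v = (\<Sum>N\<in>F. x N)"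
      using NN by (metis (no_types))
    have N3: "\<forall>F x. F \<subseteq> \<N> \<and> finite F \<and> (\<forall>N\<in>F. x N \<in> N) \<and> (\<Sum>N\<in>F. x N) = 0 \<longrightarrow> (\<forall>N\<in>F. x N = 0)"
      using NN by (metis (no_types))
    have N1': "\<forall>N\<in>\<N>. gsubmodule scM \<rho> N" using N1 by (simp add: gsimple_def)
    note CP = comp_props[OF modM N1' N2 N3 addM]
    obtain \<alpha> where \<alpha>N: "\<alpha> \<in> \<N>" and \<alpha>x: "comp \<N> \<alpha> x \<noteq> 0" using CP(3)[OF x0] by blast
    define \<pi> where "\<pi> = comp \<N> \<alpha>"
    have \<pi>_lin: "glin scM \<rho> scM \<rho> \<pi>" unfolding \<pi>_def using CP(1) .
    have \<pi>_in: "\<And>v. \<pi> v \<in> \<alpha>" unfolding \<pi>_def using CP(2)[OF \<alpha>N] .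
    obtain m' where m'I: "m' \<in> invariants \<rho>" and um: "\<pi> m' \<noteq> 0"
      using glin_kills_span[OF modM modM \<pi>_lin, of "invariants \<rho>" x] xP \<alpha>x unfolding UM_def \<pi>_def by blast
    define u where "u = \<pi> m'"
    have uI: "\<forall>d. \<rho> d u = 0"
    proof
      fix d
      have "\<rho> d u = \<pi> (\<rho> d m')" unfolding u_def using \<pi>_lin by (simp add: glin_def)
      also have "\<dots> = 0" using m'I glin_zero[OF \<pi>_lin] by (simp add: invariants_def)
      finally show "\<rho> d u = 0" .
    qed
    define h where "h = \<pi> \<circ> (p \<circ> (f \<circ> pQ))"
    have h_lin: "glin scS \<phi> scM \<rho> h" unfolding h_def
      by (intro glin_comp[OF glin_comp[OF glin_comp[OF pQ_lin f_lin] p_lin] \<pi>_lin])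
    have pQq: "pQ q = q" unfolding pQ_def
      using proj_unique[OF modS gQ gUS QUS decS qQ] module.subspace_0[OF modS] gUS
      by (simp add: gsubmodule_def)
    have hq: "h q \<noteq> 0" using \<alpha>x pQq by (simp add: h_def f_def x_def \<pi>_def)
    have \<alpha>s: "gsimple scM \<rho> \<alpha>" using N1 \<alpha>N by blast
    have img: "\<And>B. gsubmodule scS \<phi> B \<Longrightarrow> h ` B \<noteq> {0} \<Longrightarrow> h ` B = \<alpha>"
    proof -
      fix B assume B: "gsubmodule scS \<phi> B" "h ` B \<noteq> {0}"
      have "gsubmodule scM \<rho> (h ` B)" using gsub_image[OF modS modM h_lin B(1)] .
      moreover have "h ` B \<subseteq> \<alpha>" using \<pi>_in by (auto simp: h_def)
      moreover have "\<forall>N'. gsubmodule scM \<rho> N' \<and> N' \<subseteq> \<alpha> \<longrightarrow> N' = {0} \<or> N' = \<alpha>"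
        using \<alpha>s unfolding gsimple_def by (rule conjunct2[THEN conjunct2])
      ultimately show "h ` B = \<alpha>" using B(2) by blast
    qed
    have "gsubmodule scS \<phi> UNIV" using module.subspace_UNIV[OF modS] by (simp add: gsubmodule_def)
    moreover have "h ` UNIV \<noteq> {0}" using hq by blast
    ultimately have "h ` UNIV = \<alpha>" using img by blast
    moreover have "u \<in> \<alpha>" unfolding u_def using \<pi>_in .
    ultimately obtain s where us: "u = h s" by blast
    have S_ss': "gsemisimple scS \<phi>" using S_ss unfolding scS_def .
    obtain \<P> where PP: "(\<forall>N\<in>\<P>. gsimple scS \<phi> N)
      \<and> (\<forall>v. \<exists>F x. F \<subseteq> \<P> \<and> finite F \<and> (\<forall>N\<in>F. x N \<in> N) \<and> v = (\<Sum>N\<in>F. x N))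
      \<and> (\<forall>F x. F \<subseteq> \<P> \<and> finite F \<and> (\<forall>N\<in>F. x N \<in> N) \<and> (\<Sum>N\<in>F. x N) = 0 \<longrightarrow> (\<forall>N\<in>F. x N = 0))"
      using S_ss' unfolding gsemisimple_def by (rule exE)
    have P1: "\<forall>N\<in>\<P>. gsimple scS \<phi> N" using PP by (rule conjunct1)
    have P2: "\<forall>v. \<exists>F x. F \<subseteq> \<P> \<and> finite F \<and> (\<forall>N\<in>F. x N \<in> N) \<and> v = (\<Sum>N\<in>F. x N)"
      using PP by (metis (no_types))
    obtain F y where F: "F \<subseteq> \<P>" "finite F" "\<forall>N\<in>F. y N \<in> N" "s = (\<Sum>N\<in>F. y N)" using P2 by meson
    have usum: "u = (\<Sum>N\<in>F. h (y N))" using us F(4) glin_sum[OF h_lin] by simp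
    have "\<exists>\<beta>\<in>F. h (y \<beta>) \<noteq> 0"
    proof (rule ccontr)
      assume "\<not> (\<exists>\<beta>\<in>F. h (y \<beta>) \<noteq> 0)"
      hence "\<forall>\<beta>\<in>F. h (y \<beta>) = 0" by blast
      hence "u = 0" using usum by simp
      thus False using um unfolding u_def by simp
    qed
    then obtain \<beta> where \<beta>F: "\<beta> \<in> F" and hy: "h (y \<beta>) \<noteq> 0" by blast
    have \<beta>s: "gsimple scS \<phi> \<beta>" using P1 F(1) \<beta>F by blast
    hence \<beta>g: "gsubmodule scS \<phi> \<beta>" by (simp add: gsimple_def)
    have y\<beta>: "y \<beta> \<in> \<beta>" using F(3) \<beta>F by blast
    have "h ` \<beta> \<noteq> {0}" using hy y\<beta> by blast
    hence "h ` \<beta> = \<alpha>" using img \<beta>g by blast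
    then obtain v where v\<beta>: "v \<in> \<beta>" and uv: "u = h v" using \<open>u \<in> \<alpha>\<close> by blast
    define K where "K = {w\<in>\<beta>. h w = 0}"
    have "gsubmodule scS \<phi> K" unfolding K_def
      using gsub_kernel[OF modS h_lin \<beta>g modM] additive.zero[OF adM] by blast
    moreover have "K \<subseteq> \<beta>" unfolding K_def by blast
    moreover have "K \<noteq> \<beta>" using y\<beta> hy unfolding K_def by blast
    moreover have "\<forall>N'. gsubmodule scS \<phi> N' \<and> N' \<subseteq> \<beta> \<longrightarrow> N' = {0} \<or> N' = \<beta>"
      using \<beta>s unfolding gsimple_def by (rule conjunct2[THEN conjunct2])
    ultimately have K0: "K = {0}" by blast
    have "\<forall>d. \<phi> d v = 0"
    proof
      fix d
      have "\<phi> d v \<in> \<beta>" using \<beta>g v\<beta> by (simp add: gsubmodule_def)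
      moreover have "h (\<phi> d v) = 0" using h_lin uv uI by (simp add: glin_def)
      ultimately show "\<phi> d v = 0" using K0 unfolding K_def by blast
    qed
    hence "v \<in> US" unfolding US_def using module.span_base[OF modS] by (simp add: invariants_def)
    hence "pQ v = 0" unfolding pQ_def
      using proj_unique[OF modS gQ gUS QUS decS, of 0 v] module.subspace_0[OF modS] gQ
      by (simp add: gsubmodule_def)
    hence "h v = 0" using glin_zero[OF f_lin] glin_zero[OF p_lin] glin_zero[OF \<pi>_lin] by (simp add: h_def)
    thus False using uv um unfolding u_def by simp
  qed
qed

end
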